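(* Let $p,q\geq1$ be integers and let $\gamma(s)=(x(s),y(s))$ be a smooth curve with $x,y>0$, parametrized by arc length, with $\dot x=\cos\alpha$, $\dot y=\sin\alpha$ for a smooth function $\alpha(s)$, satisfying $$3\dot\alpha+p\,\frac{\sin\alpha}{x}-q\,\frac{\cos\alpha}{y}=0.$$ Let $I=y^{q/3}\cos\alpha$ and $J=x^{p/3}\sin\alpha$. Then $I$ and $J$ are increasing along such solutions. *)

theory Defs
  imports "HOL-Analysis.Analysis"
begin

end

theory Submission
  imports Defs
begin

lemma alg1:
  fixes P Yp Sn C X Y a p q :: real
  assumes "X > 0" "Y > 0" "a = (q * C / Y - p * Sn / X) / 3"
  shows "P * (0 * L + Sn * (q / 3) / Y) * C + (- Sn * a) * P = P * (p * Sn^2 / (3 * X))"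
  unfolding assms(3) using assms(1,2) by (simp add: field_simps power2_eq_square)
lemma alg2:
  fixes P Yp Sn C X Y a p q :: real
  assumes "X > 0" "Y > 0" "a = (q * C / Y - p * Sn / X) / 3"
  shows "P * (0 * L + C * (p / 3) / X) * Sn + (C * a) * P = P * (q * C^2 / (3 * Y))"
  unfolding assms(3) using assms(1,2) by (simp add: field_simps power2_eq_square)

lemma solve3: fixes a u v :: real assumes "3 * a + u - v = 0" shows "a = (v - u) / 3"
  using assms by simp

lemma mono_helper:
  fixes f f' :: "real \<Rightarrow> real"
  assumes "is_interval S"
    and "\<And>s. s \<in> S \<Longrightarrow> (f has_real_derivative f' s) (at s)"
    and "\<And>s. s \<in> S \<Longrightarrow> f' s \<ge> 0"
  shows "mono_on S f"
proof (rule mono_onI)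
  fix a b assume ab: "a \<in> S" "b \<in> S" "a \<le> b"
  have sub: "t \<in> S" if "a \<le> t" "t \<le> b" for t
    using assms(1) ab that unfolding is_interval_1 by blast
  have ex: "\<exists>y. DERIV f t :> y \<and> y \<ge> 0" if "a < t" "t < b" for t
  proof -
    have "t \<in> S" using sub that by simp
    then show ?thesis using assms(2,3) by blast
  qed
  have "isCont f t" if "t \<in> {a..b}" for t
  proof -
    have "t \<in> S" using sub that by simp
    then show ?thesis using assms(2) DERIV_isCont by blast
  qed
  then have cont: "continuous_on {a..b} f"
    by (simp add: continuous_at_imp_continuous_on)
  show "f a \<le> f b"
    by (rule DERIV_nonneg_imp_increasing_open[OF ab(3) ex cont])
qed

theorem lemma4p3:
  fixes x y \<alpha> \<alpha>' :: "real \<Rightarrow> real" and S :: "real set" and p q :: nat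
  assumes "p \<ge> 1" and "q \<ge> 1"
    and "open S" and "is_interval S"
    and "\<And>s. s \<in> S \<Longrightarrow> x s > 0 \<and> y s > 0"
    and "\<And>s. s \<in> S \<Longrightarrow> (x has_real_derivative cos (\<alpha> s)) (at s)"
    and "\<And>s. s \<in> S \<Longrightarrow> (y has_real_derivative sin (\<alpha> s)) (at s)"
    and "\<And>s. s \<in> S \<Longrightarrow> (\<alpha> has_real_derivative \<alpha>' s) (at s)"
    and "\<And>s. s \<in> S \<Longrightarrow>
           3 * \<alpha>' s + real p * sin (\<alpha> s) / x s - real q * cos (\<alpha> s) / y s = 0"
  shows "mono_on S (\<lambda>s. y s powr (real q / 3) * cos (\<alpha> s))
       \<and> mono_on S (\<lambda>s. x s powr (real p / 3) * sin (\<alpha> s))"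
proof
  show "mono_on S (\<lambda>s. y s powr (real q / 3) * cos (\<alpha> s))"
  proof (rule mono_helper[OF assms(4)])
    fix s assume s: "s \<in> S"
    have pos: "x s > 0" "y s > 0" using assms(5)[OF s] by auto
    have a': "\<alpha>' s = (real q * cos (\<alpha> s) / y s - real p * sin (\<alpha> s) / x s) / 3"
      by (rule solve3[OF assms(9)[OF s]])
    have d1: "((\<lambda>s. y s powr (real q / 3)) has_real_derivative
        (y s powr (real q / 3)) * (0 * ln (y s) + sin (\<alpha> s) * (real q / 3) / y s)) (at s)"
      by (rule DERIV_powr[OF assms(7)[OF s] pos(2)]) (rule DERIV_const)
    have d2: "((\<lambda>s. cos (\<alpha> s)) has_real_derivative - sin (\<alpha> s) * \<alpha>' s) (at s)"
      using DERIV_fun_cos[OF assms(8)[OF s]] by simp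
    show "((\<lambda>s. y s powr (real q / 3) * cos (\<alpha> s)) has_real_derivative
        (y s powr (real q / 3)) * (real p * (sin (\<alpha> s))^2 / (3 * x s))) (at s)"
    proof -
      have e: "(y s powr (real q / 3)) * (0 * ln (y s) + sin (\<alpha> s) * (real q / 3) / y s) * cos (\<alpha> s)
          + (- sin (\<alpha> s) * \<alpha>' s) * y s powr (real q / 3)
          = (y s powr (real q / 3)) * (real p * (sin (\<alpha> s))^2 / (3 * x s))"
        by (rule alg1[OF pos(1) pos(2) a'])
      show ?thesis using DERIV_mult[OF d1 d2] unfolding e .
    qed
    show "0 \<le> (y s powr (real q / 3)) * (real p * (sin (\<alpha> s))^2 / (3 * x s))"
      using pos by simp
  qed
  show "mono_on S (\<lambda>s. x s powr (real p / 3) * sin (\<alpha> s))"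
  proof (rule mono_helper[OF assms(4)])
    fix s assume s: "s \<in> S"
    have pos: "x s > 0" "y s > 0" using assms(5)[OF s] by auto
    have a': "\<alpha>' s = (real q * cos (\<alpha> s) / y s - real p * sin (\<alpha> s) / x s) / 3"
      by (rule solve3[OF assms(9)[OF s]])
    have d1: "((\<lambda>s. x s powr (real p / 3)) has_real_derivative
        (x s powr (real p / 3)) * (0 * ln (x s) + cos (\<alpha> s) * (real p / 3) / x s)) (at s)"
      by (rule DERIV_powr[OF assms(6)[OF s] pos(1)]) (rule DERIV_const)
    have d2: "((\<lambda>s. sin (\<alpha> s)) has_real_derivative cos (\<alpha> s) * \<alpha>' s) (at s)"
      using DERIV_fun_sin[OF assms(8)[OF s]] by simp
    show "((\<lambda>s. x s powr (real p / 3) * sin (\<alpha> s)) has_real_derivative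
        (x s powr (real p / 3)) * (real q * (cos (\<alpha> s))^2 / (3 * y s))) (at s)"
    proof -
      have e: "(x s powr (real p / 3)) * (0 * ln (x s) + cos (\<alpha> s) * (real p / 3) / x s) * sin (\<alpha> s)
          + (cos (\<alpha> s) * \<alpha>' s) * x s powr (real p / 3)
          = (x s powr (real p / 3)) * (real q * (cos (\<alpha> s))^2 / (3 * y s))"
        by (rule alg2[OF pos(1) pos(2) a'])
      show ?thesis using DERIV_mult[OF d1 d2] unfolding e .
    qed
    show "0 \<le> (x s powr (real p / 3)) * (real q * (cos (\<alpha> s))^2 / (3 * y s))"
      using pos by simp
  qed
qed

end
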